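(* Let $b_k>0$ for all $k\ge0$ and suppose that for some $m$, $$\frac{a_0}{b_0}\le\frac{a_1}{b_1}\le\dots\le\frac{a_m}{b_m},\qquad \frac{a_m}{b_m}\ge\frac{a_{m+1}}{b_{m+1}}\ge\frac{a_{m+2}}{b_{m+2}}\ge\cdots,$$ with at least one strict inequality in each chain. Let $$F(x)=\frac{A(x)}{B(x)}=\frac{\sum_{k=0}^\infty a_k(x)_k}{\sum_{k=0}^\infty b_k(x)_k},$$ and assume each series converges uniformly on all compact subsets of $\mathbb{R}$. Then $F(x+1)-F(x)<0$ for all sufficiently large $x$.
   Context: $(x)_k=x(x+1)\cdots(x+k-1)$ is the Pochhammer symbol, $(x)_0=1$. *)

theory Defs
  imports "HOL-Analysis.Analysis"
begin

end

theory Submission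
  imports Defs
begin

lemma tri_identity:
  fixes a b p :: "nat \<Rightarrow> real"
  shows "(\<Sum>k<n. \<Sum>j<k. (real k - real j) * (a k * b j - a j * b k) * p j * p k) =
    (\<Sum>k<n. real k * a k * p k) * (\<Sum>k<n. b k * p k) - (\<Sum>k<n. a k * p k) * (\<Sum>k<n. real k * b k * p k)"
proof (induction n)
  case 0 then show ?case by simp
next
  case (Suc n)
  have "(\<Sum>j<n. (real n - real j) * (a n * b j - a j * b n) * p j * p n) =
     real n * a n * p n * (\<Sum>k<n. b k * p k) + (\<Sum>k<n. real k * a k * p k) * (b n * p n)
     - a n * p n * (\<Sum>k<n. real k * b k * p k) - (\<Sum>k<n. a k * p k) * (real n * b n * p n)"
  proof -
    have "(\<Sum>j<n. (real n - real j) * (a n * b j - a j * b n) * p j * p n) =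
      (\<Sum>j<n. real n * a n * p n * (b j * p j) + real j * a j * p j * (b n * p n)
         - a n * p n * (real j * b j * p j) - a j * p j * (real n * b n * p n))"
      by (rule sum.cong) (auto simp: algebra_simps)
    also have "\<dots> = real n * a n * p n * (\<Sum>k<n. b k * p k) + (\<Sum>k<n. real k * a k * p k) * (b n * p n)
     - a n * p n * (\<Sum>k<n. real k * b k * p k) - (\<Sum>k<n. a k * p k) * (real n * b n * p n)"
      by (simp only: sum.distrib sum_subtractf sum_distrib_left sum_distrib_right)
    finally show ?thesis .
  qed
  then show ?case using Suc by (simp add: algebra_simps)
qed

lemma r_up:
  fixes r :: "nat \<Rightarrow> real"
  assumes "\<And>k. k < m \<Longrightarrow> r k \<le> r (Suc k)" "j \<le> k" "k \<le> m"
  shows "r j \<le> r k"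
  using assms(2,3)
proof (induction k rule: dec_induct)
  case base then show ?case by simp
next
  case (step i) then show ?case using assms(1)[of i] by simp
qed

lemma r_down:
  fixes r :: "nat \<Rightarrow> real"
  assumes "\<And>k. m \<le> k \<Longrightarrow> r (Suc k) \<le> r k" "m \<le> j" "j \<le> k"
  shows "r k \<le> r j"
  using assms(3)
proof (induction k rule: dec_induct)
  case base then show ?case by simp
next
  case (step i) then show ?case using assms(1)[of i] assms(2) by simp
qed

lemma poch_mono:
  fixes x :: real
  assumes "x \<ge> 1" "j \<le> k"
  shows "pochhammer x j \<le> pochhammer x k"
  using assms(2)
proof (induction k rule: dec_induct)
  case base then show ?case by simp
next
  case (step i)
  have "pochhammer x i \<le> pochhammer x i * (x + real i)"
    using pochhammer_pos[of x i] assms(1) by simp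
  then show ?case using step by (simp add: pochhammer_rec' mult.commute)
qed

lemma poch_gap:
  fixes x :: real
  assumes "x \<ge> 1" "j < k"
  shows "pochhammer x j * x \<le> pochhammer x k"
proof -
  have "pochhammer x j * x \<le> pochhammer x j * (x + real j)"
    using pochhammer_pos[of x j] assms(1) by simp
  also have "\<dots> = pochhammer x (Suc j)" by (simp add: pochhammer_rec' mult.commute)
  also have "\<dots> \<le> pochhammer x k" using poch_mono assms by simp
  finally show ?thesis .
qed

theorem lemma5:
  fixes a b :: "nat \<Rightarrow> real" and m :: nat
  assumes bpos: "\<And>k. b k > 0"
    and up: "\<And>k. k < m \<Longrightarrow> a k / b k \<le> a (Suc k) / b (Suc k)"
    and up_strict: "\<exists>k<m. a k / b k < a (Suc k) / b (Suc k)"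
    and down: "\<And>k. m \<le> k \<Longrightarrow> a (Suc k) / b (Suc k) \<le> a k / b k"
    and down_strict: "\<exists>k\<ge>m. a (Suc k) / b (Suc k) < a k / b k"
    and unifA: "\<And>K. compact K \<Longrightarrow>
        uniform_limit K (\<lambda>n x. \<Sum>k<n. a k * pochhammer x k)
                        (\<lambda>x. \<Sum>k. a k * pochhammer x k) sequentially"
    and unifB: "\<And>K. compact K \<Longrightarrow>
        uniform_limit K (\<lambda>n x. \<Sum>k<n. b k * pochhammer x k)
                        (\<lambda>x. \<Sum>k. b k * pochhammer x k) sequentially"
  defines "F \<equiv> (\<lambda>x::real. (\<Sum>k. a k * pochhammer x k) / (\<Sum>k. b k * pochhammer x k))"
  shows "\<forall>\<^sub>F x in at_top. F (x + 1) - F x < 0"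
proof -
  define r where "r k = a k / b k" for k
  have a_eq: "a k = r k * b k" for k using bpos[of k] by (simp add: r_def)
  have rup: "r j \<le> r k" if "j \<le> k" "k \<le> m" for j k
    by (rule r_up[of m r]) (use up that in \<open>auto simp: r_def\<close>)
  have rdown: "r k \<le> r j" if "m \<le> j" "j \<le> k" for j k
    by (rule r_down[of m r]) (use down that in \<open>auto simp: r_def\<close>)
  have rmax: "r k \<le> r m" for k
    by (cases "k \<le> m") (auto intro: rup rdown)
  obtain k0 where k0: "k0 \<ge> m" "r (Suc k0) < r k0" using down_strict by (auto simp: r_def)
  define s where "s = Suc k0"
  define \<delta> where "\<delta> = r m - r s"
  have \<delta>pos: "\<delta> > 0" using k0 rdown[of k0 k0] rmax[of k0] by (simp add: \<delta>_def s_def)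
  have ms: "m < s" using k0 by (simp add: s_def)
  have rs: "r k \<le> r m - \<delta>" if "s \<le> k" for k
    using rdown[of s k] ms that by (simp add: \<delta>_def)
  define d where "d j = r m - r j" for j
  have dnn: "d j \<ge> 0" for j using rmax[of j] by (simp add: d_def)
  define C1 where "C1 = (\<Sum>j<m. b j * d j)"
  define K where "K = (\<Sum>k<s. \<Sum>j<m. real k * b j * b k * d j)"
  have bd: "0 \<le> b j * d j" for j using bpos[of j] dnn[of j] by simp
  have C1nn: "C1 \<ge> 0" unfolding C1_def using bd by (auto intro!: sum_nonneg)
  have kbd: "0 \<le> real k * b j * b k * d j" for j k using bpos[of j] bpos[of k] dnn[of j] by simp
  have Knn: "K \<ge> 0" unfolding K_def by (intro sum_nonneg kbd)
  define X where "X = 1 + 2*(real m+1)*C1/(b m*\<delta>) + 2*K/(b m*b s*\<delta>)"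
  have main: "F (x+1) - F x < 0" if xX: "x \<ge> X" for x
  proof -
    have nn1: "2*(real m+1)*C1/(b m*\<delta>) \<ge> 0" using C1nn bpos[of m] \<delta>pos by simp
    have nn2: "2*K/(b m*b s*\<delta>) \<ge> 0" using Knn bpos[of m] bpos[of s] \<delta>pos by simp
    have x1: "x \<ge> 1" and x0: "x > 0" using xX nn1 nn2 by (auto simp: X_def)
    have xC1: "2*(real m+1)*C1/(b m*\<delta>) < x" using xX nn2 by (simp add: X_def)
    have xK: "2*K/(b m*b s*\<delta>) < x" using xX nn1 by (simp add: X_def)
    define p where "p k = pochhammer x k" for k
    have ppos: "p k > 0" for k using pochhammer_pos[of x k] x0 by (simp add: p_def)
    have convA: "(\<lambda>k. a k * pochhammer y k) sums (\<Sum>k. a k * pochhammer y k)" for y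
      using tendsto_uniform_limitI[OF unifA[of "{y}"]] by (simp add: sums_def)
    have convB: "(\<lambda>k. b k * pochhammer y k) sums (\<Sum>k. b k * pochhammer y k)" for y
      using tendsto_uniform_limitI[OF unifB[of "{y}"]] by (simp add: sums_def)
    define A0 where "A0 = (\<Sum>k. a k * p k)"
    define A1 where "A1 = (\<Sum>k. a k * pochhammer (x+1) k)"
    define B0 where "B0 = (\<Sum>k. b k * p k)"
    define B1 where "B1 = (\<Sum>k. b k * pochhammer (x+1) k)"
    have sA0: "(\<lambda>k. a k * p k) sums A0" using convA[of x] by (simp add: A0_def p_def)
    have sB0: "(\<lambda>k. b k * p k) sums B0" using convB[of x] by (simp add: B0_def p_def)
    have sA1: "(\<lambda>k. a k * pochhammer (x+1) k) sums A1" using convA[of "x+1"] by (simp add: A1_def)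
    have sB1: "(\<lambda>k. b k * pochhammer (x+1) k) sums B1" using convB[of "x+1"] by (simp add: B1_def)
    have kp: "x * pochhammer (x+1) k - x * p k = real k * p k" for k
    proof -
      have "x * pochhammer (x+1) k = (x + real k) * p k"
        using pochhammer_rec[of x k] pochhammer_rec'[of x k] by (simp add: p_def)
      then show ?thesis by (simp add: algebra_simps)
    qed
    have sR1: "(\<lambda>k. real k * a k * p k) sums (x*A1 - x*A0)"
    proof -
      have "(\<lambda>k. x * (a k * pochhammer (x+1) k) - x * (a k * p k)) sums (x*A1 - x*A0)"
        by (intro sums_diff sums_mult sA1 sA0)
      moreover have "x * (a k * pochhammer (x+1) k) - x * (a k * p k) = real k * a k * p k" for k
      proof -
        have "x * (a k * pochhammer (x+1) k) - x * (a k * p k) = a k * (x * pochhammer (x+1) k - x * p k)"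
          by (simp add: algebra_simps)
        also have "\<dots> = real k * a k * p k" by (simp add: kp)
        finally show ?thesis .
      qed
      ultimately show ?thesis by simp
    qed
    have sS1: "(\<lambda>k. real k * b k * p k) sums (x*B1 - x*B0)"
    proof -
      have "(\<lambda>k. x * (b k * pochhammer (x+1) k) - x * (b k * p k)) sums (x*B1 - x*B0)"
        by (intro sums_diff sums_mult sB1 sB0)
      moreover have "x * (b k * pochhammer (x+1) k) - x * (b k * p k) = real k * b k * p k" for k
      proof -
        have "x * (b k * pochhammer (x+1) k) - x * (b k * p k) = b k * (x * pochhammer (x+1) k - x * p k)"
          by (simp add: algebra_simps)
        also have "\<dots> = real k * b k * p k" by (simp add: kp)
        finally show ?thesis .
      qed
      ultimately show ?thesis by simp
    qed
    have B0pos: "B0 > 0" unfolding B0_def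
      by (rule suminf_pos) (use sB0 bpos ppos in \<open>auto simp: sums_iff\<close>)
    have B1pos: "B1 > 0" unfolding B1_def
      by (rule suminf_pos) (use sB1 bpos pochhammer_pos[of "x+1"] x0 in \<open>auto simp: sums_iff\<close>)
    define L where "L = (x*A1 - x*A0) * B0 - A0 * (x*B1 - x*B0)"
    have Feq: "F (x+1) - F x = L / (x * B0 * B1)"
      using B0pos B1pos x0
      by (simp add: F_def L_def A0_def A1_def B0_def B1_def p_def field_simps)
    define t where "t j k = (real k - real j) * (a k * b j - a j * b k) * p j * p k" for j k
    define P where "P n = (\<Sum>k<n. \<Sum>j<k. t j k)" for n
    have P_lim: "P \<longlonglongrightarrow> L"
    proof -
      have "P = (\<lambda>n. (\<Sum>k<n. real k * a k * p k) * (\<Sum>k<n. b k * p k) - (\<Sum>k<n. a k * p k) * (\<Sum>k<n. real k * b k * p k))"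
        unfolding P_def t_def by (rule ext) (rule tri_identity)
      moreover have "(\<lambda>n. (\<Sum>k<n. real k * a k * p k) * (\<Sum>k<n. b k * p k) - (\<Sum>k<n. a k * p k) * (\<Sum>k<n. real k * b k * p k)) \<longlonglongrightarrow> L"
        unfolding L_def
        using sR1 sB0 sA0 sS1 unfolding sums_def by (intro tendsto_intros)
      ultimately show ?thesis by simp
    qed
    define M where "M = p m * p s * (K/x - b m*b s*\<delta>/2)"
    have Mneg: "M < 0"
    proof -
      have "2*K < x * (b m*b s*\<delta>)" using xK bpos[of m] bpos[of s] \<delta>pos by (simp add: pos_divide_less_eq)
      then have "K/x < b m*b s*\<delta>/2" using x0 by (simp add: pos_divide_less_eq algebra_simps)
      then show ?thesis unfolding M_def using ppos[of m] ppos[of s] by (simp add: mult_pos_neg)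
    qed
    have P_bound: "P n \<le> M" if "n \<ge> Suc s" for n
    proof -
      have t_eq: "t j k = ((real k - real j) * b j * b k * p j * p k) * (r k - r j)" for j k
        by (simp add: t_def a_eq algebra_simps)
      have Wnn: "0 \<le> (real k - real j) * b j * b k * p j * p k" if "j \<le> k" for j k
        using that bpos[of j] bpos[of k] ppos[of j] ppos[of k] by simp
      have t_le0: "t j k \<le> 0" if "m \<le> j" "j < k" for j k
        unfolding t_eq using Wnn[of j k] rdown[of j k] that
        by (intro mult_nonneg_nonpos) auto
      define e where "e k j = real k * b j * b k * d j * p j * p k" for k j
      have enn: "0 \<le> e k j" for k j
        unfolding e_def using kbd[of k j] ppos[of j] ppos[of k] by simp
      have t_lej: "t j k \<le> e k j" if "j < m" "j < k" for j k
      proof -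
        have "t j k \<le> ((real k - real j) * b j * b k * p j * p k) * d j"
          unfolding t_eq d_def using Wnn[of j k] that rmax[of k]
          by (intro mult_left_mono) auto
        also have "\<dots> \<le> (real k * b j * b k * p j * p k) * d j"
          using dnn[of j] bpos[of j] bpos[of k] ppos[of j] ppos[of k]
          by (intro mult_right_mono) auto
        finally show ?thesis by (simp add: e_def algebra_simps)
      qed
      define c where "c k = (real k - real m) * b m * b k * p m * p k * \<delta>" for k
      have t_lem: "t m k \<le> - c k" if "s \<le> k" for k
      proof -
        have "t m k \<le> ((real k - real m) * b m * b k * p m * p k) * (- \<delta>)"
          unfolding t_eq using Wnn[of m k] that rs[of k] ms
          by (intro mult_left_mono) auto
        then show ?thesis by (simp add: c_def)
      qed
      define V where "V k = (\<Sum>j<k. t j k)" for k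
      have PV: "P n = (\<Sum>k<n. V k)" by (simp add: P_def V_def)
      have Va: "V k \<le> (\<Sum>j<m. e k j)" for k
      proof -
        have "V k \<le> (\<Sum>j<k. if j \<in> {..<m} then e k j else 0)"
          unfolding V_def
          by (intro sum_mono) (auto intro: t_lej t_le0)
        also have "\<dots> = (\<Sum>j\<in>{..<k} \<inter> {..<m}. e k j)"
          by (simp add: sum.inter_restrict)
        also have "\<dots> \<le> (\<Sum>j<m. e k j)"
          by (rule sum_mono2) (auto intro: enn)
        finally show ?thesis .
      qed
      have sum_e: "(\<Sum>j<m. e k j) = real k * b k * p k * (\<Sum>j<m. b j * d j * p j)" for k
        unfolding e_def sum_distrib_left by (rule sum.cong) (auto simp: algebra_simps)
      have pjm: "p j \<le> p m / x" if "j < m" for j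
        using poch_gap[OF x1 that] x0 by (simp add: p_def pos_le_divide_eq)
      have sbd: "(\<Sum>j<m. b j * d j * p j) \<le> C1 * (p m / x)"
      proof -
        have "(\<Sum>j<m. b j * d j * p j) \<le> (\<Sum>j<m. b j * d j * (p m / x))"
          by (intro sum_mono mult_left_mono pjm bd) auto
        then show ?thesis by (simp only: C1_def sum_distrib_right)
      qed
      have xC1': "(real m + 1) * C1 / x \<le> b m * \<delta> / 2"
      proof -
        have "2*(real m+1)*C1 < x * (b m*\<delta>)" using xC1 bpos[of m] \<delta>pos by (simp add: pos_divide_less_eq)
        then show ?thesis using x0 by (simp add: pos_divide_le_eq algebra_simps)
      qed
      have Vb: "V k \<le> - c k / 2" if "s \<le> k" for k
      proof -
        have mk: "m < k" using ms that by simp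
        define f where "f j = (if j < m then e k j else if j = m then - c k else 0)" for j
        have "V k \<le> (\<Sum>j<k. f j)"
          unfolding V_def f_def
          by (intro sum_mono) (auto intro: t_lej t_le0 t_lem that)
        also have "(\<Sum>j<k. f j) = (\<Sum>j<m. e k j) - c k"
        proof -
          have "{..<k} = {..<m} \<union> {m..<k}" using mk by auto
          then have "(\<Sum>j<k. f j) = (\<Sum>j<m. f j) + (\<Sum>j\<in>{m..<k}. f j)"
            by (simp add: sum.union_disjoint ivl_disj_int)
          also have "(\<Sum>j\<in>{m..<k}. f j) = f m + (\<Sum>j\<in>{Suc m..<k}. f j)"
            using mk by (simp add: sum.atLeast_Suc_lessThan)
          also have "(\<Sum>j\<in>{Suc m..<k}. f j) = 0" by (rule sum.neutral) (auto simp: f_def)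
          also have "(\<Sum>j<m. f j) = (\<Sum>j<m. e k j)" by (rule sum.cong) (auto simp: f_def)
          finally show ?thesis by (simp add: f_def)
        qed
        also have "(\<Sum>j<m. e k j) \<le> c k / 2"
        proof -
          have km1: "real k - real m \<ge> 1" using mk by simp
          have "real m * 1 \<le> real m * (real k - real m)" by (rule mult_left_mono) (use km1 in auto)
          then have kle: "real k \<le> (real m + 1) * (real k - real m)" by (simp add: algebra_simps)
          have bkp: "0 \<le> b k * p k" using bpos[of k] ppos[of k] by simp
          have "(\<Sum>j<m. e k j) \<le> real k * b k * p k * (C1 * (p m / x))"
            unfolding sum_e using bkp by (intro mult_left_mono sbd) (auto simp: mult.assoc)
          also have "\<dots> \<le> ((real m + 1) * (real k - real m)) * b k * p k * (C1 * (p m / x))"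
            using kle bkp C1nn ppos[of m] x0 bpos[of k] ppos[of k]
            by (intro mult_right_mono) (auto simp: mult.assoc)
          also have "\<dots> = ((real k - real m) * b k * p k * p m) * ((real m + 1) * C1 / x)"
            by (simp add: field_simps)
          also have "\<dots> \<le> ((real k - real m) * b k * p k * p m) * (b m * \<delta> / 2)"
            using km1 bkp ppos[of m] bpos[of k] ppos[of k] by (intro mult_left_mono xC1') auto
          also have "\<dots> = c k / 2" by (simp add: c_def algebra_simps)
          finally show ?thesis .
        qed
        finally show ?thesis by simp
      qed
      have cnn: "c k \<ge> 0" if "s \<le> k" for k
        unfolding c_def using that ms bpos[of m] bpos[of k] ppos[of m] ppos[of k] \<delta>pos by simp
      have cs: "c s \<ge> b m * b s * p m * p s * \<delta>"
      proof -
        have "1 * (b m * b s * p m * p s * \<delta>) \<le> (real s - real m) * (b m * b s * p m * p s * \<delta>)"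
          using ms bpos[of m] bpos[of s] ppos[of m] ppos[of s] \<delta>pos
          by (intro mult_right_mono) auto
        then show ?thesis by (simp add: c_def algebra_simps)
      qed
      have part1: "(\<Sum>k<s. V k) \<le> K * (p m * (p s / x))"
      proof -
        have "(\<Sum>k<s. V k) \<le> (\<Sum>k<s. \<Sum>j<m. e k j)" by (intro sum_mono Va)
        also have "\<dots> \<le> (\<Sum>k<s. \<Sum>j<m. (real k * b j * b k * d j) * (p m * (p s / x)))"
        proof (intro sum_mono)
          fix k j assume "k \<in> {..<s}" "j \<in> {..<m}"
          then have "p j \<le> p m" "p k \<le> p s / x" using poch_mono[OF x1, of j m] pjm poch_gap[OF x1, of k s] x0
            by (auto simp: p_def pos_le_divide_eq)
          then have "p j * p k \<le> p m * (p s / x)"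
            using ppos[of j] ppos[of k] by (intro mult_mono) auto
          then show "e k j \<le> (real k * b j * b k * d j) * (p m * (p s / x))"
            unfolding e_def using kbd[of k j] mult_left_mono by (metis mult.assoc)
        qed
        also have "\<dots> = K * (p m * (p s / x))"
          by (simp only: K_def sum_distrib_right)
        finally show ?thesis .
      qed
      have part3: "(\<Sum>k\<in>{Suc s..<n}. V k) \<le> 0"
      proof (rule sum_nonpos)
        fix k assume "k \<in> {Suc s..<n}"
        then have "s \<le> k" by simp
        then show "V k \<le> 0" using Vb[of k] cnn[of k] by linarith
      qed
      have split: "(\<Sum>k<n. V k) = (\<Sum>k<s. V k) + V s + (\<Sum>k\<in>{Suc s..<n}. V k)"
        using that by (metis atLeast0LessThan sum.atLeastLessThan_concat zero_le sum.lessThan_Suc)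
      have "P n \<le> K * (p m * (p s / x)) - c s / 2 + 0"
        unfolding PV split using part1 part3 Vb[of s] by linarith
      also have "\<dots> \<le> M" using cs by (simp add: M_def algebra_simps)
      finally show ?thesis .
    qed
    have "L \<le> M" by (rule LIMSEQ_le_const2[OF P_lim]) (use P_bound in blast)
    then have "L < 0" using Mneg by simp
    then show ?thesis unfolding Feq using x0 B0pos B1pos by (simp add: divide_neg_pos)
  qed
  then show ?thesis unfolding eventually_at_top_linorder by blast
qed

end
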